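(* Let $D\subseteq\mathbb{R}^n$ be a closed convex set containing no line, let $a_1,\dots,a_m\in\mathbb{R}^n$ and $-\infty\le b_i^l\le b_i^u\le+\infty$ for $i\in[m]$, and let $\tilde m\le m$ be the dimension of $\operatorname{span}\{a_1,\dots,a_m\}$. Suppose $\mathcal{H}=D\cap\{x\in\mathbb{R}^n: b_i^l\le\langle a_i,x\rangle\le b_i^u\ \forall i\in[m]\}$ is unbounded. Then every extreme ray of the recession cone $\operatorname{rec}(\mathcal{H})$ is contained in a face of $\operatorname{rec}(D)$ of dimension at most $\tilde m+1$.
   Context: For a closed convex set $D$, its recession cone is $\operatorname{rec}(D)=\{d: x+td\in D\ \forall x\in D,\ t\ge0\}$. A face of a closed convex set $D$ is a convex $F\subseteq D$ such that any segment $[a,b]\subseteq D$ with $(a,b)\cap F\neq\emptyset$ lies in $F$; its dimension is that of its affine hull. An extreme ray of a closed pointed convex cone is a face of it which is a half-line emanating from the origin. *)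

theory Defs
  imports "HOL-Analysis.Analysis" "HOL-Library.Extended_Real"
begin

definition rec_cone :: "'a::real_vector set \<Rightarrow> 'a set" where
  "rec_cone D = {d. \<forall>x\<in>D. \<forall>t::real. t \<ge> 0 \<longrightarrow> x + t *\<^sub>R d \<in> D}"

definition contains_no_line :: "'a::real_vector set \<Rightarrow> bool" where
  "contains_no_line D \<longleftrightarrow> \<not> (\<exists>x d. d \<noteq> 0 \<and> (\<forall>t::real. x + t *\<^sub>R d \<in> D))"

definition extreme_ray :: "'a::real_vector set \<Rightarrow> 'a set \<Rightarrow> bool" where
  "extreme_ray C R \<longleftrightarrow> R face_of C \<and> (\<exists>d. d \<noteq> 0 \<and> R = (\<lambda>t. t *\<^sub>R d) ` {0::real..})"

end

theory Submission
  imports Defs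
begin

lemma rec_cone_closed_point:
  fixes D :: "'a::euclidean_space set"
  assumes "closed D" "convex D" "x0 \<in> D" "\<forall>t\<ge>0. x0 + t *\<^sub>R d \<in> D"
  shows "d \<in> rec_cone D"
  unfolding rec_cone_def
proof (intro CollectI ballI allI impI)
  fix x and t :: real assume x: "x \<in> D" and t: "t \<ge> 0"
  have "x + t *\<^sub>R d \<in> closure D"
    unfolding closure_approachable
  proof (intro allI impI)
    fix e :: real assume e: "e > 0"
    define l where "l = min 1 (e / (2 * (norm (x0 - x) + 1)))"
    have pos: "2 * (norm (x0 - x) + 1) > 0" by (smt (verit) norm_ge_zero)
    have l0: "l > 0" using e pos by (simp add: l_def)
    have l1: "l \<le> 1" by (simp add: l_def)
    have "x0 + (t / l) *\<^sub>R d \<in> D" using assms(4) t l0 by simp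
    then have z: "(1 - l) *\<^sub>R x + l *\<^sub>R (x0 + (t / l) *\<^sub>R d) \<in> D"
      using assms(2) x l0 l1 by (simp add: convex_def)
    have eq: "(1 - l) *\<^sub>R x + l *\<^sub>R (x0 + (t / l) *\<^sub>R d) - (x + t *\<^sub>R d) = l *\<^sub>R (x0 - x)"
      using l0 by (simp add: algebra_simps)
    have "l * norm (x0 - x) \<le> (e / (2 * (norm (x0 - x) + 1))) * norm (x0 - x)"
      by (intro mult_right_mono) (auto simp: l_def)
    also have "\<dots> < e"
    proof -
      have "norm (x0 - x) < 2 * (norm (x0 - x) + 1)" by (smt (verit) norm_ge_zero)
      then have "norm (x0 - x) / (2 * (norm (x0 - x) + 1)) < 1" using pos divide_less_eq_1_pos by blast
      then have "e * (norm (x0 - x) / (2 * (norm (x0 - x) + 1))) < e * 1"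
        using e by (intro mult_strict_left_mono) auto
      then show ?thesis by simp
    qed
    finally have "dist ((1 - l) *\<^sub>R x + l *\<^sub>R (x0 + (t / l) *\<^sub>R d)) (x + t *\<^sub>R d) < e"
      unfolding dist_norm eq using l0 by simp
    then show "\<exists>y\<in>D. dist y (x + t *\<^sub>R d) < e" using z by blast
  qed
  then show "x + t *\<^sub>R d \<in> D" using assms(1) by (simp add: closure_closed)
qed

lemma rec_cone_convex:
  assumes "convex D" shows "convex (rec_cone D)"
proof (rule convexI)
  fix d1 d2 and u v :: real
  assume d1: "d1 \<in> rec_cone D" and d2: "d2 \<in> rec_cone D"
    and u: "0 \<le> u" and v: "0 \<le> v" and uv: "u + v = 1"
  show "u *\<^sub>R d1 + v *\<^sub>R d2 \<in> rec_cone D"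
    unfolding rec_cone_def
  proof (intro CollectI ballI allI impI)
    fix x and t :: real assume x: "x \<in> D" and t: "0 \<le> t"
    have "x + t *\<^sub>R d1 \<in> D" "x + t *\<^sub>R d2 \<in> D" using d1 d2 x t unfolding rec_cone_def by auto
    then have "u *\<^sub>R (x + t *\<^sub>R d1) + v *\<^sub>R (x + t *\<^sub>R d2) \<in> D"
      using assms u v uv unfolding convex_def by blast
    moreover have "u *\<^sub>R (x + t *\<^sub>R d1) + v *\<^sub>R (x + t *\<^sub>R d2) = (u + v) *\<^sub>R x + t *\<^sub>R (u *\<^sub>R d1 + v *\<^sub>R d2)"
      by (simp add: algebra_simps)
    ultimately show "x + t *\<^sub>R (u *\<^sub>R d1 + v *\<^sub>R d2) \<in> D" using uv by simp
  qed
qed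

lemma rec_cone_scale:
  assumes "d \<in> rec_cone D" "c \<ge> (0::real)" shows "c *\<^sub>R d \<in> rec_cone D"
  using assms unfolding rec_cone_def by (auto simp: mult_nonneg_nonneg)

lemma rec_cone_zero: "0 \<in> rec_cone D"
  unfolding rec_cone_def by auto

theorem lemma2:
  fixes D :: "'a::euclidean_space set"
    and a :: "nat \<Rightarrow> 'a"
    and bl bu :: "nat \<Rightarrow> ereal"
    and m :: nat
  assumes "closed D" and "convex D" and "contains_no_line D"
    and "\<forall>i<m. bl i \<le> bu i"
    and "\<not> bounded (D \<inter> {x. \<forall>i<m. bl i \<le> ereal (a i \<bullet> x) \<and> ereal (a i \<bullet> x) \<le> bu i})"
  shows "\<forall>R. extreme_ray (rec_cone (D \<inter> {x. \<forall>i<m. bl i \<le> ereal (a i \<bullet> x) \<and> ereal (a i \<bullet> x) \<le> bu i})) R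
           \<longrightarrow> (\<exists>F. F face_of rec_cone D \<and> R \<subseteq> F
                   \<and> aff_dim F \<le> int (dim (span (a ` {..<m}))) + 1)"
proof (intro allI impI)
  define H where "H = D \<inter> {x. \<forall>i<m. bl i \<le> ereal (a i \<bullet> x) \<and> ereal (a i \<bullet> x) \<le> bu i}"
  define C where "C = rec_cone D"
  fix R assume "extreme_ray (rec_cone (D \<inter> {x. \<forall>i<m. bl i \<le> ereal (a i \<bullet> x) \<and> ereal (a i \<bullet> x) \<le> bu i})) R"
  then have Rf: "R face_of rec_cone H" and "\<exists>d. d \<noteq> 0 \<and> R = (\<lambda>t. t *\<^sub>R d) ` {0::real..}"
    unfolding extreme_ray_def H_def by auto
  then obtain d where d0: "d \<noteq> 0" and Rd: "R = (\<lambda>t. t *\<^sub>R d) ` {0::real..}" by blast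
  have dR: "d \<in> R" unfolding Rd by (rule image_eqI[of _ _ 1]) auto
  have dH: "d \<in> rec_cone H" using dR Rf face_of_imp_subset by blast
  have "H \<noteq> {}" using assms(5) unfolding H_def by auto
  then obtain x0 where x0: "x0 \<in> H" by blast
  have dC: "d \<in> C" unfolding C_def
    using rec_cone_closed_point[OF assms(1,2), of x0 d] x0 dH unfolding rec_cone_def H_def by auto
  have convC: "convex C" unfolding C_def using rec_cone_convex[OF assms(2)] .
  have transfer: "e \<in> rec_cone H" if "e \<in> C" "\<forall>i<m. a i \<bullet> e = a i \<bullet> d" for e
    unfolding rec_cone_def
  proof (intro CollectI ballI allI impI)
    fix x and t :: real assume x: "x \<in> H" and t: "0 \<le> t"
    have "x + t *\<^sub>R e \<in> D" using that(1) x t unfolding C_def rec_cone_def H_def by auto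
    moreover have "x + t *\<^sub>R d \<in> H" using dH x t unfolding rec_cone_def by auto
    moreover have "a i \<bullet> (x + t *\<^sub>R e) = a i \<bullet> (x + t *\<^sub>R d)" if "i < m" for i
      using \<open>\<forall>i<m. a i \<bullet> e = a i \<bullet> d\<close> that by (simp add: inner_add_right)
    ultimately show "x + t *\<^sub>R e \<in> H" unfolding H_def by auto
  qed
  let ?P = "\<lambda>F. F face_of C \<and> d \<in> F"
  have "?P C" using face_of_refl[OF convC] dC by blast
  from ex_has_least_nat[of ?P C "\<lambda>F. nat (aff_dim F + 1)", OF this]
  obtain F where FC: "F face_of C" and dF: "d \<in> F"
    and Fmin: "\<And>G. G face_of C \<Longrightarrow> d \<in> G \<Longrightarrow> nat (aff_dim F + 1) \<le> nat (aff_dim G + 1)"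
    by blast
  have convF: "convex F" using FC face_of_imp_convex by blast
  have FsubC: "F \<subseteq> C" using FC face_of_imp_subset by blast
  have drel: "d \<in> rel_interior F"
  proof (rule ccontr)
    assume "d \<notin> rel_interior F"
    then obtain u where u: "u \<noteq> 0" "\<And>y. y \<in> F \<Longrightarrow> u \<bullet> d \<le> u \<bullet> y"
      "\<And>y. y \<in> rel_interior F \<Longrightarrow> u \<bullet> d < u \<bullet> y"
      using supporting_hyperplane_rel_boundary[OF convF dF] by metis
    define T where "T = F \<inter> {x. u \<bullet> x = u \<bullet> d}"
    have TF: "T face_of F" unfolding T_def
      using face_of_Int_supporting_hyperplane_ge[OF convF] u(2) by blast
    have TC: "T face_of C" using face_of_trans[OF TF FC] .
    have dT: "d \<in> T" using dF unfolding T_def by simp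
    have "rel_interior F \<noteq> {}" using rel_interior_eq_empty[OF convF] dF by blast
    then obtain y where y: "y \<in> rel_interior F" by blast
    have "y \<notin> T" using u(3)[OF y] unfolding T_def by auto
    moreover have "y \<in> F" using y rel_interior_subset by blast
    ultimately have "T \<noteq> F" by blast
    then have "aff_dim T < aff_dim F" using face_of_aff_dim_lt[OF convF TF] by blast
    moreover have "nat (aff_dim F + 1) \<le> nat (aff_dim T + 1)" using Fmin[OF TC dT] .
    moreover have "aff_dim T \<ge> -1" using aff_dim_geq by blast
    ultimately show False by linarith
  qed
  have RF: "R \<subseteq> F"
  proof
    fix r assume "r \<in> R"
    then obtain t :: real where t: "t \<ge> 0" "r = t *\<^sub>R d" unfolding Rd by auto
    show "r \<in> F"
    proof (cases "t = 1")
      case True then show ?thesis using dF t by simp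
    next
      case False
      define s where "s = max 2 (t + 1)"
      have s: "s > 1" "s > t" by (auto simp: s_def)
      have tC: "t *\<^sub>R d \<in> C" using rec_cone_scale dC t(1) unfolding C_def by blast
      have sC: "s *\<^sub>R d \<in> C" using rec_cone_scale[of d D s] dC s unfolding C_def by auto
      show ?thesis
      proof (cases "t < 1")
        case True
        have "d \<in> open_segment (t *\<^sub>R d) (s *\<^sub>R d)"
        proof -
          define w where "w = (1 - t) / (s - t)"
          have w: "0 < w" "w < 1" using True s by (auto simp: w_def field_simps)
          have "(1 - w) *\<^sub>R (t *\<^sub>R d) + w *\<^sub>R (s *\<^sub>R d) = ((1 - w) * t + w * s) *\<^sub>R d"
            by (simp add: algebra_simps)
          also have "(1 - w) * t + w * s = 1"
          proof -
            have "w * (s - t) = 1 - t" using s by (simp add: w_def)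
            then show ?thesis by (simp add: algebra_simps)
          qed
          finally have eq: "(1 - w) *\<^sub>R (t *\<^sub>R d) + w *\<^sub>R (s *\<^sub>R d) = d" by simp
          have ne: "t *\<^sub>R d \<noteq> s *\<^sub>R d" using s d0 by auto
          have st: "(s - t) * (s - t) > 0" using s by simp
          have nt: "d \<noteq> t *\<^sub>R d" using True d0 scaleR_cancel_right[of 1 d t] by auto
          have ns: "d \<noteq> s *\<^sub>R d" using s d0 scaleR_cancel_right[of 1 d s] by auto
          from st have ne2: "s * s + t * t \<noteq> s * (t * 2)" by (simp add: algebra_simps)
          show ?thesis unfolding open_segment_def closed_segment_def
            using w eq ne ne2 True d0 s nt ns by (auto intro!: exI[of _ w])
        qed
        then show ?thesis using face_ofD[OF FC _ tC sC dF] t by blast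
      next
        case False
        then have t1: "t > 1" using \<open>t \<noteq> 1\<close> by simp
        have zC: "0 \<in> C" unfolding C_def by (rule rec_cone_zero)
        have "d \<in> open_segment 0 (t *\<^sub>R d)"
        proof -
          have eq: "(1 - 1/t) *\<^sub>R 0 + (1/t) *\<^sub>R (t *\<^sub>R d) = d" using t1 by simp
          show ?thesis unfolding open_segment_def closed_segment_def
            using eq t1 d0 scaleR_cancel_right[of 1 d t] by (auto intro!: exI[of _ "1/t"])
        qed
        then show ?thesis using face_ofD[OF FC _ zC tC dF] t by blast
      qed
    qed
  qed
  define k where "k = dim (span (a ` {..<m}))"
  define V where "V = span ((\<lambda>x. - d + x) ` F)"
  define W where "W = {y \<in> UNIV. \<forall>x \<in> span (a ` {..<m}). orthogonal x y}"
  have subV: "subspace V" unfolding V_def by simp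
  have subW: "subspace W" unfolding W_def by (simp add: subspace_orthogonal_to_vectors)
  have affF: "aff_dim F = int (dim V)" unfolding V_def
    using aff_dim_eq_dim[of d F] dF hull_inc[of d F affine] by (simp add: dim_span)
  have hullF: "affine hull F = (\<lambda>x. d + x) ` V" unfolding V_def
    using affine_hull_span_gen[of d F] dF hull_inc[of d F affine] by simp
  have dimW: "dim W + k = DIM('a)" unfolding W_def k_def
    using dim_subspace_orthogonal_to_vectors[of "span (a ` {..<m})" UNIV] by simp
  have sumint: "dim {x + y |x y. x \<in> V \<and> y \<in> W} + dim (V \<inter> W) = dim V + dim W"
    using dim_sums_Int[OF subV subW] .
  have "dim {x + y |x y. x \<in> V \<and> y \<in> W} \<le> DIM('a)"
    using dim_subset_UNIV by blast
  then have dimVW: "dim V \<le> dim (V \<inter> W) + k" using sumint dimW by linarith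
  have "aff_dim F \<le> int k + 1"
  proof (rule ccontr)
    assume "\<not> ?thesis"
    then have "dim V \<ge> k + 2" using affF by linarith
    then have big: "dim (V \<inter> W) \<ge> 2" using dimVW by linarith
    have "\<not> (V \<inter> W \<subseteq> span {d})"
    proof
      assume "V \<inter> W \<subseteq> span {d}"
      then have "dim (V \<inter> W) \<le> card {d}" by (intro dim_le_card) auto
      then show False using big by simp
    qed
    then obtain v where vV: "v \<in> V" and vW: "v \<in> W" and vd: "v \<notin> span {d}" by blast
    have v0: "v \<noteq> 0" using vd span_zero by metis
    have av: "a i \<bullet> v = 0" if "i < m" for i
    proof -
      have "a i \<in> span (a ` {..<m})" using that by (intro span_base) auto
      then show ?thesis using vW unfolding W_def orthogonal_def by auto
    qed
    obtain e where e: "e > 0" "ball d e \<inter> affine hull F \<subseteq> F"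
      using drel mem_rel_interior_ball by blast
    define eps where "eps = e / (2 * norm v)"
    have eps: "eps > 0" using e v0 by (simp add: eps_def)
    have normv: "norm (eps *\<^sub>R v) < e" using e v0 eps by (simp add: eps_def)
    define p where "p = d + eps *\<^sub>R v"
    define q where "q = d - eps *\<^sub>R v"
    have pF: "p \<in> F"
    proof -
      have "eps *\<^sub>R v \<in> V" using subV vV by (simp add: subspace_scale)
      then have "p \<in> affine hull F" unfolding hullF p_def by blast
      moreover have "p \<in> ball d e" unfolding p_def using normv by (simp add: dist_norm)
      ultimately show ?thesis using e by blast
    qed
    have qF: "q \<in> F"
    proof -
      have "(- eps) *\<^sub>R v \<in> V" using subV vV by (rule subspace_scale)
      then have "q \<in> affine hull F" unfolding hullF q_def by force
      moreover have "q \<in> ball d e" unfolding q_def using normv by (simp add: dist_norm)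
      ultimately show ?thesis using e by blast
    qed
    have pH: "p \<in> rec_cone H"
      using transfer[of p] pF FsubC av unfolding p_def by (auto simp: inner_add_right)
    have qH: "q \<in> rec_cone H"
      using transfer[of q] qF FsubC av unfolding q_def by (auto simp: inner_diff_right)
    have pq: "p \<noteq> q"
    proof
      assume "p = q"
      then have "eps *\<^sub>R v + eps *\<^sub>R v = 0" unfolding p_def q_def by (simp add: algebra_simps)
      then have "(2 * eps) *\<^sub>R v = 0" by (metis mult_2 scaleR_add_left)
      then show False using eps v0 by simp
    qed
    have "midpoint p q = d" unfolding midpoint_def p_def q_def
      by (simp add: algebra_simps flip: scaleR_add_left)
    then have "d \<in> open_segment p q" using pq midpoint_in_open_segment by metis
    then have "p \<in> R" using face_ofD[OF Rf _ pH qH dR] by blast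
    then obtain t :: real where "p = t *\<^sub>R d" unfolding Rd by auto
    then have "eps *\<^sub>R v = (t - 1) *\<^sub>R d" unfolding p_def by (simp add: algebra_simps)
    then have "v = ((t - 1) / eps) *\<^sub>R d" using eps
      by (metis (no_types, lifting) divide_inverse_commute eps less_irrefl scaleR_scaleR
          inverse_eq_divide right_inverse scaleR_one mult.commute)
    then have "v \<in> span {d}" by (simp add: span_base span_scale)
    then show False using vd by blast
  qed
  then show "\<exists>F. F face_of rec_cone D \<and> R \<subseteq> F \<and> aff_dim F \<le> int (dim (span (a ` {..<m}))) + 1"
    using FC RF unfolding C_def k_def by blast
qed

end
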